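(* Let $\mathcal{H}$ be a Hilbert space, $\mathcal{H}_1$ a closed subspace with $\{0\}\ne\mathcal{H}_1\ne\mathcal{H}$, $P:\mathcal{H}\to\mathcal{H}_1$ the orthogonal projection onto $\mathcal{H}_1$, $Q:\mathcal{H}\to\mathcal{H}_1^\perp$ the orthogonal projection onto $\mathcal{H}_1^\perp$, $H\ge0$ a bounded selfadjoint operator on $\mathcal{H}$, $H_t:=H+tQ^*Q$, $\lambda_t:=\min\sigma(H_t)$ and $\lambda_\infty:=\min\sigma(PHP^* )$ (with $PHP^*$ regarded as an operator on $\mathcal{H}_1$). Then $\lambda_\infty\ge\lambda_t$ for all $t\ge0$, and for $t\ge2\|H+1\|^2$, $$\lambda_t\ge\lambda_\infty-\frac{4\|H+1\|^2(\lambda_\infty+1)^2}{t+1}\ge\lambda_\infty-\frac{4\|H+1\|^4}{t+1}.$$ *)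

theory Defs
  imports "HOL-Analysis.Analysis"
begin

text \<open>Real spectrum of an operator A restricted to an (invariant) subspace S:
  l is in the resolvent set iff A - l I is a bijection of S onto itself
  (for bounded operators on a closed subspace of a Hilbert space the inverse is
  then automatically bounded, by the open mapping theorem).\<close>
definition spectrum_on :: "'a::real_normed_vector set \<Rightarrow> ('a \<Rightarrow> 'a) \<Rightarrow> real set" where
  "spectrum_on S A = {l. \<not> bij_betw (\<lambda>x. A x - l *\<^sub>R x) S S}"

definition is_orth_proj :: "'a::real_inner set \<Rightarrow> ('a \<Rightarrow> 'a) \<Rightarrow> bool" where
  "is_orth_proj S P \<longleftrightarrow> (\<forall>x. P x \<in> S \<and> x - P x \<in> orthogonal_comp S)"

definition selfadjoint_op :: "('a::real_inner \<Rightarrow> 'a) \<Rightarrow> bool" where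
  "selfadjoint_op A \<longleftrightarrow> bounded_linear A \<and> (\<forall>x y. inner (A x) y = inner x (A y))"

end

theory Submission
  imports Defs
begin


lemma orth_proj_props:
  fixes S :: "'a::real_inner set"
  assumes sub: "subspace S" and P: "is_orth_proj S P"
  shows "bounded_linear P" "\<And>x y. y \<in> S \<Longrightarrow> inner (P x) y = inner x y"
    "\<And>x. P x \<in> S" "\<And>x y. inner (P x) y = inner x (P y)" "\<And>x. x \<in> S \<Longrightarrow> P x = x"
proof -
  have PS: "\<And>x. P x \<in> S" and PO: "\<And>x. x - P x \<in> orthogonal_comp S"
    using P by (auto simp: is_orth_proj_def)
  show "\<And>x. P x \<in> S" by (rule PS)
  have zero: "w = 0" if "w \<in> S" "w \<in> orthogonal_comp S" for w
    using that by (auto simp: orthogonal_comp_def orthogonal_def)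
  show inn: "\<And>x y. y \<in> S \<Longrightarrow> inner (P x) y = inner x y"
  proof -
    fix x y assume "y \<in> S"
    then have "inner y (x - P x) = 0" using PO[of x] by (auto simp: orthogonal_comp_def orthogonal_def)
    then show "inner (P x) y = inner x y" by (simp add: inner_diff_right inner_commute)
  qed
  show "\<And>x y. inner (P x) y = inner x (P y)"
  proof -
    fix x y
    have "inner (P x) y = inner (P y) (P x)" using inn[OF PS[of x], of y] by (simp add: inner_commute)
    also have "\<dots> = inner x (P y)" using inn[OF PS[of y], of x] by (simp add: inner_commute)
    finally show "inner (P x) y = inner x (P y)" .
  qed
  show "\<And>x. x \<in> S \<Longrightarrow> P x = x"
  proof -
    fix x assume "x \<in> S"
    have "x - P x \<in> S" using \<open>x\<in>S\<close> PS sub by (simp add: subspace_diff)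
    then show "P x = x" using zero PO by fastforce
  qed
  have add: "P (x + y) = P x + P y" for x y
  proof -
    let ?w = "P (x + y) - (P x + P y)"
    have "?w \<in> S" using PS sub by (simp add: subspace_diff subspace_add)
    moreover have eq: "?w = (x - P x) + (y - P y) - (x + y - P (x + y))" by (simp add: algebra_simps)
    have "?w \<in> orthogonal_comp S" unfolding eq
      by (intro subspace_diff subspace_add subspace_orthogonal_comp PO)
    ultimately show ?thesis using zero by fastforce
  qed
  have scal: "P (r *\<^sub>R x) = r *\<^sub>R P x" for r x
  proof -
    let ?w = "P (r *\<^sub>R x) - r *\<^sub>R P x"
    have "?w \<in> S" using PS sub by (simp add: subspace_diff subspace_scale)
    moreover have eq: "?w = r *\<^sub>R (x - P x) - (r *\<^sub>R x - P (r *\<^sub>R x))" by (simp add: algebra_simps)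
    have "?w \<in> orthogonal_comp S" unfolding eq
      by (intro subspace_diff subspace_scale subspace_orthogonal_comp PO)
    ultimately show ?thesis using zero by fastforce
  qed
  have bnd: "norm (P x) \<le> norm x * 1" for x
  proof -
    have "(norm (P x))\<^sup>2 = inner x (P x)" using inn[OF PS[of x]] by (simp add: power2_norm_eq_inner)
    also have "\<dots> \<le> norm x * norm (P x)" by (rule Cauchy_Schwarz_ineq2[THEN order_trans[OF abs_ge_self]])
    finally have "norm (P x) * norm (P x) \<le> norm x * norm (P x)" by (simp add: power2_eq_square)
    then show ?thesis
      by (cases "norm (P x) = 0") (auto simp: mult_le_cancel_right)
  qed
  show "bounded_linear P" by (rule bounded_linear_intro[OF add scal bnd])
qed

lemma coercive_bij:
  fixes S :: "'a::{real_inner,complete_space} set"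
  assumes cl: "closed S" and sub: "subspace S" and T: "bounded_linear T"
    and TS: "\<And>x. x \<in> S \<Longrightarrow> T x \<in> S" and d: "d > 0"
    and coer: "\<And>x. x \<in> S \<Longrightarrow> d * (norm x)\<^sup>2 \<le> inner (T x) x"
  shows "bij_betw T S S"
proof -
  interpret T: bounded_linear T by fact
  obtain K0 where K0: "\<And>x. norm (T x) \<le> norm x * K0" "K0 > 0" using T.pos_bounded by blast
  define K where "K = K0 + d"
  have K: "\<And>x. norm (T x) \<le> norm x * K" "K > 0" "d < K"
  proof -
    fix x :: 'a
    have "norm x * K0 \<le> norm x * K" using d unfolding K_def by (intro mult_left_mono) auto
    then show "norm (T x) \<le> norm x * K" using K0(1)[of x] by linarith
  qed (use K0 d in \<open>auto simp: K_def\<close>)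
  have inj: "inj_on T S"
  proof (rule inj_onI)
    fix x y assume "x \<in> S" "y \<in> S" "T x = T y"
    then have "x - y \<in> S" "T (x - y) = 0" using sub by (auto simp: subspace_diff T.diff)
    then have "d * (norm (x - y))\<^sup>2 \<le> 0" using coer by fastforce
    then show "x = y" using d by (simp add: mult_le_0_iff)
  qed
  define c where "c = d / K\<^sup>2"
  define q where "q = 1 - d\<^sup>2 / K\<^sup>2"
  have "d\<^sup>2 < K\<^sup>2" using K d by (intro power_strict_mono) auto
  then have "d\<^sup>2 / K\<^sup>2 < 1" "0 < d\<^sup>2 / K\<^sup>2" using K d by auto
  then have q: "0 \<le> q" "q < 1" unfolding q_def by auto
  have contr: "(norm (w - c *\<^sub>R T w))\<^sup>2 \<le> q * (norm w)\<^sup>2" if "w \<in> S" for w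
  proof -
    have "(norm (w - c *\<^sub>R T w))\<^sup>2 = (norm w)\<^sup>2 - 2 * c * inner (T w) w + c\<^sup>2 * (norm (T w))\<^sup>2"
      by (simp only: power2_norm_eq_inner inner_diff_left inner_diff_right inner_scaleR_left inner_scaleR_right inner_commute[of w "T w"]) (simp add: power2_eq_square algebra_simps)
    also have "\<dots> \<le> (norm w)\<^sup>2 - 2 * c * (d * (norm w)\<^sup>2) + c\<^sup>2 * (norm w * K)\<^sup>2"
    proof -
      have "c \<ge> 0" using d K unfolding c_def by simp
      moreover have "(norm (T w))\<^sup>2 \<le> (norm w * K)\<^sup>2" using K(1) by (simp add: power_mono)
      moreover have "c * (d * (norm w)\<^sup>2) \<le> c * inner (T w) w"
        using coer[OF that] \<open>c \<ge> 0\<close> by (rule mult_left_mono)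
      moreover have "c\<^sup>2 * (norm (T w))\<^sup>2 \<le> c\<^sup>2 * (norm w * K)\<^sup>2"
        using \<open>(norm (T w))\<^sup>2 \<le> (norm w * K)\<^sup>2\<close> by (rule mult_left_mono) simp
      ultimately show ?thesis by linarith
    qed
    also have "\<dots> = q * (norm w)\<^sup>2" using K unfolding c_def q_def
      by (simp add: field_simps power2_eq_square)
    finally show ?thesis .
  qed
  have surj: "T ` S = S"
  proof
    show "T ` S \<subseteq> S" using TS by auto
    show "S \<subseteq> T ` S"
    proof
      fix y assume y: "y \<in> S"
      define G where "G x = x - c *\<^sub>R (T x - y)" for x
      have "\<exists>!x\<in>S. G x = x"
      proof (rule Banach_fix)
        show "complete S" using cl by (simp add: complete_eq_closed)
        show "S \<noteq> {}" using sub subspace_0 by blast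
        show "0 \<le> sqrt q" using q by simp
        show "sqrt q < 1" using q by simp
        show "G ` S \<subseteq> S" unfolding G_def using sub TS y
          by (auto intro!: subspace_diff subspace_scale)
        fix x z assume "x \<in> S" "z \<in> S"
        then have w: "x - z \<in> S" using sub by (simp add: subspace_diff)
        have "G x - G z = (x - z) - c *\<^sub>R T (x - z)"
          unfolding G_def by (simp add: T.diff algebra_simps)
        then have "(norm (G x - G z))\<^sup>2 \<le> q * (norm (x - z))\<^sup>2" using contr[OF w] by simp
        then have "sqrt ((norm (G x - G z))\<^sup>2) \<le> sqrt (q * (norm (x - z))\<^sup>2)"
          using real_sqrt_le_mono by blast
        then show "dist (G x) (G z) \<le> sqrt q * dist x z"
          by (simp add: dist_norm real_sqrt_mult)
      qed
      then obtain x where "x \<in> S" "G x = x" by blast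
      then have "c *\<^sub>R (T x - y) = 0" unfolding G_def by simp
      moreover have "c \<noteq> 0" using d K unfolding c_def by simp
      ultimately have "T x = y" by simp
      then show "y \<in> T ` S" using \<open>x \<in> S\<close> by blast
    qed
  qed
  show ?thesis using inj surj by (simp add: bij_betw_def)
qed



lemma discr:
  fixes a b c :: real
  assumes "\<And>s. 0 \<le> a + 2 * s * b + s\<^sup>2 * c" and "c \<ge> 0"
  shows "b\<^sup>2 \<le> a * c"
proof (cases "c = 0")
  case True
  show ?thesis
  proof (cases "b = 0")
    case False
    have "0 \<le> a + 2 * (- (a + 1) / (2 * b)) * b + (- (a + 1) / (2 * b))\<^sup>2 * c" by (rule assms(1))
    with False True show ?thesis by (simp add: field_simps)
  qed (use True in simp)
next
  case False
  then have c: "c > 0" using assms(2) by simp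
  have "0 \<le> a + 2 * (- b / c) * b + (- b / c)\<^sup>2 * c" by (rule assms(1))
  then have "0 \<le> a - b\<^sup>2 / c" using c by (simp add: field_simps power2_eq_square)
  then have "b\<^sup>2 / c \<le> a" by simp
  then show ?thesis using c by (simp add: divide_le_eq mult.commute)
qed

lemma degenerate_not_surj:
  fixes S :: "'a::{real_inner,complete_space} set"
  assumes cl: "closed S" and sub: "subspace S" and T: "bounded_linear T"
    and TS: "\<And>x. x \<in> S \<Longrightarrow> T x \<in> S"
    and sym: "\<And>x y. x \<in> S \<Longrightarrow> y \<in> S \<Longrightarrow> inner (T x) y = inner x (T y)"
    and pos: "\<And>x. x \<in> S \<Longrightarrow> 0 \<le> inner (T x) x"
    and approx: "\<And>e. e > 0 \<Longrightarrow> \<exists>x\<in>S. norm x = 1 \<and> inner (T x) x < e"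
  shows "T ` S \<noteq> S"
proof
  interpret T: bounded_linear T by fact
  obtain K where K: "\<And>x. norm (T x) \<le> norm x * K" "K > 0" using T.pos_bounded by blast
  have CS: "(norm (T x))\<^sup>2 \<le> K * inner (T x) x" if x: "x \<in> S" for x
  proof -
    define z where "z = T x"
    have z: "z \<in> S" using TS x unfolding z_def by simp
    have q: "0 \<le> inner (T x) x + 2 * s * inner (T x) z + s\<^sup>2 * inner (T z) z" for s
    proof -
      have "x + s *\<^sub>R z \<in> S" using x z sub by (simp add: subspace_add subspace_scale)
      then have "0 \<le> inner (T (x + s *\<^sub>R z)) (x + s *\<^sub>R z)" by (rule pos)
      also have "\<dots> = inner (T x) x + s * inner (T x) z + s * inner (T z) x + s\<^sup>2 * inner (T z) z"
        by (simp add: T.add T.scaleR inner_add_left inner_add_right power2_eq_square algebra_simps)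
      also have "inner (T z) x = inner (T x) z" using sym[OF z x] by (simp add: inner_commute)
      finally show ?thesis by simp
    qed
    have "(inner (T x) z)\<^sup>2 \<le> inner (T x) x * inner (T z) z"
      by (rule discr[OF q pos[OF z]])
    moreover have "inner (T x) z = (norm (T x))\<^sup>2" unfolding z_def by (simp add: power2_norm_eq_inner)
    ultimately have "(norm (T x))\<^sup>2 * (norm (T x))\<^sup>2 \<le> inner (T x) x * inner (T z) z"
      by (simp add: power2_eq_square)
    also have "\<dots> \<le> inner (T x) x * (K * (norm (T x))\<^sup>2)"
    proof (rule mult_left_mono[OF _ pos[OF x]])
      have "inner (T z) z \<le> norm (T z) * norm z" by (rule norm_cauchy_schwarz)
      also have "\<dots> \<le> norm z * K * norm z" using K(1)[of z] by (intro mult_right_mono) auto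
      finally show "inner (T z) z \<le> K * (norm (T x))\<^sup>2" unfolding z_def by (simp add: power2_eq_square algebra_simps)
    qed
    finally have "(norm (T x))\<^sup>2 * (norm (T x))\<^sup>2 \<le> (K * inner (T x) x) * (norm (T x))\<^sup>2"
      by (simp add: algebra_simps)
    then show ?thesis
    proof (cases "norm (T x) = 0")
      case False
      then have "(norm (T x))\<^sup>2 > 0" by simp
      then show ?thesis using \<open>(norm (T x))\<^sup>2 * (norm (T x))\<^sup>2 \<le> (K * inner (T x) x) * (norm (T x))\<^sup>2\<close>
        by (meson mult_right_le_imp_le)
    qed (use K pos[OF x] in auto)
  qed
  have approx2: "\<exists>x\<in>S. norm x = 1 \<and> norm (T x) < e" if e: "e > 0" for e
  proof -
    obtain x where x: "x \<in> S" "norm x = 1" "inner (T x) x < e\<^sup>2 / K" using approx[of "e\<^sup>2 / K"] e K by auto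
    have "(norm (T x))\<^sup>2 \<le> K * inner (T x) x" by (rule CS[OF x(1)])
    also have "\<dots> < K * (e\<^sup>2 / K)" using x(3) K by (intro mult_strict_left_mono) auto
    also have "\<dots> = e\<^sup>2" using K by simp
    finally have "norm (T x) < e" using e by (simp add: power_less_imp_less_base)
    then show ?thesis using x by blast
  qed
  assume surj: "T ` S = S"
  define F where "F k = {y\<in>S. \<forall>x\<in>S. inner x y \<le> real k * norm (T x)}" for k :: nat
  have clF: "closedin (top_of_set S) (F k)" for k
  proof -
    have eq: "F k = S \<inter> (\<Inter>x\<in>S. {y. inner x y \<le> real k * norm (T x)})" unfolding F_def by auto
    have "closed (S \<inter> (\<Inter>x\<in>S. {y. inner x y \<le> real k * norm (T x)}))"
      using cl by (intro closed_Int closed_INT ballI closed_halfspace_le) auto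
    then show ?thesis unfolding eq by (intro closed_subset) auto
  qed
  have UF: "\<Union> (range F) = S"
  proof
    show "\<Union> (range F) \<subseteq> S" unfolding F_def by auto
    show "S \<subseteq> \<Union> (range F)"
    proof
      fix y assume "y \<in> S"
      then obtain u where u: "u \<in> S" "y = T u" using surj by blast
      define k where "k = nat \<lceil>norm u\<rceil>"
      have "y \<in> F k" unfolding F_def
      proof (intro CollectI conjI ballI)
        show "y \<in> S" by fact
        fix x assume x: "x \<in> S"
        have "inner x y = inner u (T x)" using sym[OF u(1) x] u(2) by (simp add: inner_commute)
        also have "\<dots> \<le> norm u * norm (T x)" by (rule norm_cauchy_schwarz)
        also have "\<dots> \<le> real k * norm (T x)" unfolding k_def
          by (intro mult_right_mono) (auto simp: real_nat_ceiling_ge)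
        finally show "inner x y \<le> real k * norm (T x)" .
      qed
      then show "y \<in> \<Union> (range F)" by blast
    qed
  qed
  have cms: "completely_metrizable_space (top_of_set S)"
    by (rule completely_metrizable_space_closedin[OF completely_metrizable_space_euclidean])
       (simp add: closed_closedin[symmetric] cl)
  have "\<exists>k. (top_of_set S) interior_of F k \<noteq> {}"
  proof (rule ccontr)
    assume "\<not> ?thesis"
    then have "(top_of_set S) interior_of \<Union> (range F) = {}"
      using cms clF by (intro Baire_category_alt) auto
    then have "S = {}" unfolding UF
      by (metis interior_of_topspace topspace_euclidean_subtopology)
    then show False using sub subspace_0 by blast
  qed
  then obtain k y0 where y0: "y0 \<in> (top_of_set S) interior_of F k" by blast
  have "openin (top_of_set S) ((top_of_set S) interior_of F k)" by (rule openin_interior_of)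
  then obtain r where r: "r > 0" "\<And>y. y \<in> S \<Longrightarrow> dist y y0 < r \<Longrightarrow> y \<in> (top_of_set S) interior_of F k"
    using y0 unfolding openin_euclidean_subtopology_iff by blast
  have intF: "(top_of_set S) interior_of F k \<subseteq> F k" by (rule interior_of_subset)
  have y0F: "y0 \<in> F k" using y0 intF by blast
  then have y0S: "y0 \<in> S" unfolding F_def by blast
  have key: "r / 2 \<le> 2 * real k * norm (T x)" if x: "x \<in> S" "norm x = 1" for x
  proof -
    define z where "z = (r / 2) *\<^sub>R x"
    have "y0 + z \<in> S" using y0S x sub unfolding z_def by (simp add: subspace_add subspace_scale)
    moreover have "dist (y0 + z) y0 < r" using r x unfolding z_def dist_norm by simp
    ultimately have "y0 + z \<in> F k" using r intF by blast
    then have 1: "inner x (y0 + z) \<le> real k * norm (T x)" using x unfolding F_def by blast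
    have "- x \<in> S" using x sub by (simp add: subspace_neg)
    then have "inner (- x) y0 \<le> real k * norm (T (- x))" using y0F unfolding F_def by blast
    then have 2: "- inner x y0 \<le> real k * norm (T x)" by (simp add: T.neg)
    have "inner x z = r / 2" using x unfolding z_def by (simp add: power2_norm_eq_inner[symmetric])
    then show ?thesis using 1 2 by (simp add: inner_add_right)
  qed
  obtain x where x: "x \<in> S" "norm x = 1" "norm (T x) < r / (4 * real k + 4)"
    using approx2[of "r / (4 * real k + 4)"] r by auto
  have "2 * real k * norm (T x) \<le> 2 * real k * (r / (4 * real k + 4))"
    using x(3) by (intro mult_left_mono) auto
  also have "\<dots> < r / 2" using r by (simp add: field_simps)
  finally show False using key[OF x(1,2)] by simp
qed


lemma quad:
  fixes L N a b d :: real
  assumes "d > 0"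
  shows "(L - N\<^sup>2 / d) * (a\<^sup>2 + b\<^sup>2) \<le> L * a\<^sup>2 - 2 * N * a * b + (L + d) * b\<^sup>2"
proof -
  have eq: "L * a\<^sup>2 - 2 * N * a * b + (L + d) * b\<^sup>2 - (L - N\<^sup>2 / d) * (a\<^sup>2 + b\<^sup>2)
      = ((N * a - d * b)\<^sup>2 + N\<^sup>2 * b\<^sup>2) / d"
    using assms by (simp add: field_simps power2_eq_square)
  have "((N * a - d * b)\<^sup>2 + N\<^sup>2 * b\<^sup>2) / d \<ge> 0" using assms by simp
  then show ?thesis using eq by linarith
qed

lemma fin:
  fixes L N t :: real
  assumes L: "L \<ge> 0" and LN: "L + 1 \<le> N" and t: "t \<ge> 2 * N\<^sup>2"
  shows "t - L > 0" "N\<^sup>2 / (t - L) \<le> 4 * N\<^sup>2 * (L + 1)\<^sup>2 / (t + 1)"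
    "4 * N\<^sup>2 * (L + 1)\<^sup>2 / (t + 1) \<le> 4 * N ^ 4 / (t + 1)"
proof -
  define M where "M = L + 1"
  have M: "M \<ge> 1" "M \<le> N" using L LN unfolding M_def by auto
  have "M\<^sup>2 \<le> N\<^sup>2" using M by (intro power_mono) auto
  moreover have "M \<le> M\<^sup>2" using M by (simp add: power2_eq_square)
  ultimately have tM: "t \<ge> 2 * M" using t by linarith
  show tL: "t - L > 0" using tM M L unfolding M_def by (simp add: algebra_simps)
  have "t + 1 \<le> 4 * (t - L)" using tM L unfolding M_def by (simp add: algebra_simps)
  also have "\<dots> \<le> 4 * M\<^sup>2 * (t - L)"
  proof -
    have "1 \<le> M\<^sup>2" using M by (simp add: one_le_power)
    then show ?thesis using tL by (intro mult_right_mono) auto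
  qed
  finally have key: "t + 1 \<le> 4 * M\<^sup>2 * (t - L)" .
  have "N\<^sup>2 * (t + 1) \<le> N\<^sup>2 * (4 * M\<^sup>2 * (t - L))" using key by (intro mult_left_mono) auto
  then show "N\<^sup>2 / (t - L) \<le> 4 * N\<^sup>2 * (L + 1)\<^sup>2 / (t + 1)"
    using tL tM M unfolding M_def by (simp add: field_simps)
  have "(L + 1)\<^sup>2 \<le> N\<^sup>2" using \<open>M\<^sup>2 \<le> N\<^sup>2\<close> unfolding M_def .
  then have "4 * N\<^sup>2 * (L + 1)\<^sup>2 \<le> 4 * N\<^sup>2 * N\<^sup>2"
    by (intro mult_left_mono) auto
  also have "\<dots> = 4 * N ^ 4" by (simp add: power2_eq_square power4_eq_xxxx)
  finally have "4 * N\<^sup>2 * (L + 1)\<^sup>2 \<le> 4 * N ^ 4" .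
  then show "4 * N\<^sup>2 * (L + 1)\<^sup>2 / (t + 1) \<le> 4 * N ^ 4 / (t + 1)"
    using tM M by (intro divide_right_mono) auto
qed
lemma spec_char:
  fixes S :: "'a::{real_inner,complete_space} set"
  assumes cl: "closed S" and sub: "subspace S" and nz: "S \<noteq> {0}" and A: "bounded_linear A"
    and AS: "\<And>x. x \<in> S \<Longrightarrow> A x \<in> S"
    and sym: "\<And>x y. x \<in> S \<Longrightarrow> y \<in> S \<Longrightarrow> inner (A x) y = inner x (A y)"
  shows "\<And>x. x \<in> S \<Longrightarrow> Inf (spectrum_on S A) * (norm x)\<^sup>2 \<le> inner (A x) x"
    and "\<And>\<mu>. (\<And>x. x \<in> S \<Longrightarrow> \<mu> * (norm x)\<^sup>2 \<le> inner (A x) x) \<Longrightarrow> \<mu> \<le> Inf (spectrum_on S A)"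
proof -
  interpret A: bounded_linear A by fact
  obtain K where K: "\<And>x. norm (A x) \<le> norm x * K" "K > 0" using A.pos_bounded by blast
  define R where "R = {inner (A x) x | x. x \<in> S \<and> norm x = 1}"
  obtain x0 where x0: "x0 \<in> S" "x0 \<noteq> 0" using nz sub subspace_0 by blast
  have "(1 / norm x0) *\<^sub>R x0 \<in> S" using x0 sub by (simp add: subspace_scale)
  moreover have "norm ((1 / norm x0) *\<^sub>R x0) = 1" using x0 by simp
  ultimately have Rne: "R \<noteq> {}" unfolding R_def by blast
  have Rbdd: "bdd_below R" unfolding R_def
  proof (rule bdd_belowI[of _ "- K"], clarify)
    fix x assume "x \<in> S" "norm x = (1::real)"
    have "\<bar>inner (A x) x\<bar> \<le> norm (A x) * norm x" by (rule Cauchy_Schwarz_ineq2)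
    also have "\<dots> \<le> K" using K(1)[of x] \<open>norm x = 1\<close> by simp
    finally show "- K \<le> inner (A x) x" by linarith
  qed
  define m where "m = Inf R"
  have munit: "m \<le> inner (A x) x" if "x \<in> S" "norm x = 1" for x
    unfolding m_def using that Rbdd by (intro cInf_lower) (auto simp: R_def)
  have mlow: "m * (norm x)\<^sup>2 \<le> inner (A x) x" if x: "x \<in> S" for x
  proof (cases "x = 0")
    case False
    define u where "u = (1 / norm x) *\<^sub>R x"
    have "u \<in> S" using x sub unfolding u_def by (simp add: subspace_scale)
    moreover have "norm u = 1" using False unfolding u_def by simp
    ultimately have "m \<le> inner (A u) u" by (rule munit)
    also have "inner (A u) u = inner (A x) x / (norm x)\<^sup>2"
      unfolding u_def by (simp add: A.scaleR power2_eq_square)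
    finally show ?thesis using False by (simp add: le_divide_eq)
  qed (simp add: A.zero)
  have mapprox: "\<exists>x\<in>S. norm x = 1 \<and> inner (A x) x < m + e" if "e > 0" for e
  proof -
    have "Inf R < m + e" using that unfolding m_def by simp
    then obtain r where "r \<in> R" "r < m + e" using cInf_lessD[OF Rne] by blast
    then show ?thesis unfolding R_def by blast
  qed
  have blT: "bounded_linear (\<lambda>x. A x - l *\<^sub>R x)" for l
    using A by (intro bounded_linear_sub bounded_linear_scaleR_right bounded_linear_ident)
  have notin: "l \<notin> spectrum_on S A" if "l < m" for l
  proof -
    have "bij_betw (\<lambda>x. A x - l *\<^sub>R x) S S"
    proof (rule coercive_bij[OF cl sub blT])
      show "A x - l *\<^sub>R x \<in> S" if "x \<in> S" for x using that AS sub by (simp add: subspace_diff subspace_scale)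
      show "m - l > 0" using \<open>l < m\<close> by simp
      show "(m - l) * (norm x)\<^sup>2 \<le> inner (A x - l *\<^sub>R x) x" if "x \<in> S" for x
        using mlow[OF that] by (simp add: inner_diff_left power2_norm_eq_inner algebra_simps)
    qed
    then show ?thesis unfolding spectrum_on_def by simp
  qed
  have min: "m \<in> spectrum_on S A"
  proof -
    have "(\<lambda>x. A x - m *\<^sub>R x) ` S \<noteq> S"
    proof (rule degenerate_not_surj[OF cl sub blT])
      show "A x - m *\<^sub>R x \<in> S" if "x \<in> S" for x using that AS sub by (simp add: subspace_diff subspace_scale)
      show "inner (A x - m *\<^sub>R x) y = inner x (A y - m *\<^sub>R y)" if "x \<in> S" "y \<in> S" for x y
        using sym[OF that] by (simp add: inner_diff_left inner_diff_right inner_commute)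
      show "0 \<le> inner (A x - m *\<^sub>R x) x" if "x \<in> S" for x
        using mlow[OF that] by (simp add: inner_diff_left power2_norm_eq_inner algebra_simps)
      show "\<exists>x\<in>S. norm x = 1 \<and> inner (A x - m *\<^sub>R x) x < e" if e: "e > 0" for e
      proof -
        obtain x where "x \<in> S" "norm x = 1" "inner (A x) x < m + e" using mapprox[OF e] by blast
        moreover have "inner x x = 1" using \<open>norm x = 1\<close> by (simp add: power2_norm_eq_inner[symmetric])
        ultimately show ?thesis by (intro bexI[of _ x]) (auto simp: inner_diff_left)
      qed
    qed
    then show ?thesis unfolding spectrum_on_def by (auto simp: bij_betw_def)
  qed
  have Inf_eq: "Inf (spectrum_on S A) = m"
    using min notin by (intro cInf_eq_minimum) (auto simp: not_less[symmetric])
  show "\<And>x. x \<in> S \<Longrightarrow> Inf (spectrum_on S A) * (norm x)\<^sup>2 \<le> inner (A x) x"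
    using mlow Inf_eq by simp
  show "\<mu> \<le> Inf (spectrum_on S A)" if h: "\<And>x. x \<in> S \<Longrightarrow> \<mu> * (norm x)\<^sup>2 \<le> inner (A x) x" for \<mu>
  proof -
    have "\<mu> \<le> m" unfolding m_def
    proof (rule cInf_greatest[OF Rne])
      fix r assume "r \<in> R"
      then obtain x where "x \<in> S" "norm x = 1" "r = inner (A x) x" unfolding R_def by blast
      then show "\<mu> \<le> r" using h[of x] by simp
    qed
    then show ?thesis using Inf_eq by simp
  qed
qed

theorem corollary4p4:
  fixes H1 :: "'a::{real_inner, complete_space} set"
    and P Q H :: "'a \<Rightarrow> 'a"
  assumes "closed H1" and "subspace H1"
    and "H1 \<noteq> {0}" and "H1 \<noteq> UNIV"
    and "is_orth_proj H1 P"
    and "is_orth_proj (orthogonal_comp H1) Q"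
    and "selfadjoint_op H"
    and "\<forall>x. inner (H x) x \<ge> 0"
  shows "(\<forall>t::real. t \<ge> 0 \<longrightarrow>
            Inf (spectrum_on H1 (\<lambda>x. P (H x)))
              \<ge> Inf (spectrum_on UNIV (\<lambda>x. H x + t *\<^sub>R Q x)))
       \<and> (\<forall>t::real. t \<ge> 2 * (onorm (\<lambda>x. H x + x))\<^sup>2 \<longrightarrow>
            Inf (spectrum_on UNIV (\<lambda>x. H x + t *\<^sub>R Q x))
              \<ge> Inf (spectrum_on H1 (\<lambda>x. P (H x)))
                 - 4 * (onorm (\<lambda>x. H x + x))\<^sup>2
                     * (Inf (spectrum_on H1 (\<lambda>x. P (H x))) + 1)\<^sup>2 / (t + 1)
          \<and> Inf (spectrum_on H1 (\<lambda>x. P (H x)))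
                 - 4 * (onorm (\<lambda>x. H x + x))\<^sup>2
                     * (Inf (spectrum_on H1 (\<lambda>x. P (H x))) + 1)\<^sup>2 / (t + 1)
              \<ge> Inf (spectrum_on H1 (\<lambda>x. P (H x)))
                 - 4 * (onorm (\<lambda>x. H x + x)) ^ 4 / (t + 1))"
proof -
  note cl = assms(1) and sub = assms(2) and nz = assms(3)
  note Pp = orth_proj_props[OF sub assms(5)]
  have Hbl: "bounded_linear H" and Hsym: "\<And>x y. inner (H x) y = inner x (H y)"
    using assms(7) unfolding selfadjoint_op_def by auto
  have Hpos: "\<And>x. 0 \<le> inner (H x) x" using assms(8) by auto
  have Hadd: "\<And>a b. H (a + b) = H a + H b" using Hbl by (simp add: linear_add bounded_linear.linear)
  have PO: "x - P x \<in> orthogonal_comp H1" for x using assms(5) unfolding is_orth_proj_def by auto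
  have Qeq: "Q x = x - P x" for x
  proof -
    have Q1: "Q x \<in> orthogonal_comp H1" and Q2: "x - Q x \<in> orthogonal_comp (orthogonal_comp H1)"
      using assms(6) unfolding is_orth_proj_def by auto
    define w where "w = (x - P x) - Q x"
    have "w \<in> orthogonal_comp H1" unfolding w_def
      by (intro subspace_diff subspace_orthogonal_comp PO Q1)
    moreover have "w = (x - Q x) - P x" unfolding w_def by simp
    then have "w \<in> orthogonal_comp (orthogonal_comp H1)"
      using Q2 Pp(3)[of x] orthogonal_comp_subset[of H1]
      by (metis subset_iff subspace_diff subspace_orthogonal_comp)
    ultimately have "inner w w = 0" unfolding orthogonal_comp_def orthogonal_def by auto
    then show ?thesis unfolding w_def by simp
  qed
  have Qfun: "(\<lambda>x. H x + t *\<^sub>R Q x) = (\<lambda>x. H x + t *\<^sub>R (x - P x))" for t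
    by (simp add: Qeq)
  define N where "N = onorm (\<lambda>x. H x + x)"
  define L where "L = Inf (spectrum_on H1 (\<lambda>x. P (H x)))"
  define Lt where "Lt t = Inf (spectrum_on UNIV (\<lambda>x. H x + t *\<^sub>R (x - P x)))" for t
  have A1bl: "bounded_linear (\<lambda>x. P (H x))"
    using bounded_linear_compose[OF Pp(1) Hbl] by (simp add: o_def)
  have A1sym: "inner (P (H x)) y = inner x (P (H y))" if "x \<in> H1" "y \<in> H1" for x y
  proof -
    have "inner (P (H x)) y = inner (H x) y" using Pp(2)[OF that(2)] .
    also have "\<dots> = inner x (H y)" by (rule Hsym)
    also have "\<dots> = inner x (P (H y))" using Pp(2)[OF that(1), of "H y"] by (simp add: inner_commute)
    finally show ?thesis .
  qed
  have A1S: "\<And>x. x \<in> H1 \<Longrightarrow> P (H x) \<in> H1" by (rule Pp(3))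
  have PHx: "inner (P (H x)) x = inner (H x) x" if "x \<in> H1" for x using Pp(2)[OF that] .
  have Llow: "L * (norm x)\<^sup>2 \<le> inner (H x) x" if "x \<in> H1" for x
  proof -
    have "L * (norm x)\<^sup>2 \<le> inner (P (H x)) x" unfolding L_def
      by (rule spec_char(1)[where S=H1 and A="\<lambda>x. P (H x)"]) (use cl sub nz A1bl A1S A1sym that in blast)+
    then show ?thesis using PHx[OF that] by simp
  qed
  obtain x0 where x0: "x0 \<in> H1" "x0 \<noteq> 0" using nz sub subspace_0 by blast
  have UNIVnz: "(UNIV::'a set) \<noteq> {0}" using x0 by auto
  have Atbl: "bounded_linear (\<lambda>x. H x + t *\<^sub>R (x - P x))" for t
    using Hbl Pp(1) by (intro bounded_linear_add bounded_linear_const_scaleR bounded_linear_sub bounded_linear_ident)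
  have Atsym: "inner (H x + t *\<^sub>R (x - P x)) y = inner x (H y + t *\<^sub>R (y - P y))" for t x y
    using Hsym[of x y] Pp(4)[of x y]
    by (simp add: inner_add_left inner_add_right inner_diff_left inner_diff_right inner_commute)
  have AtS: "\<And>x. x \<in> UNIV \<Longrightarrow> H x + t *\<^sub>R (x - P x) \<in> UNIV" for t by simp
  have AtsymU: "\<And>x y. x \<in> UNIV \<Longrightarrow> y \<in> UNIV \<Longrightarrow> inner (H x + t *\<^sub>R (x - P x)) y = inner x (H y + t *\<^sub>R (y - P y))" for t
    using Atsym by simp
  have Ltlow: "Lt t * (norm x)\<^sup>2 \<le> inner (H x + t *\<^sub>R (x - P x)) x" for t x
    unfolding Lt_def
    by (rule spec_char(1)[where S=UNIV]) (use UNIVnz Atbl AtsymU in auto)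
  have part1: "Lt t \<le> L" for t
    unfolding L_def
  proof (rule spec_char(2)[where S=H1 and A="\<lambda>x. P (H x)"])
    show "closed H1" "subspace H1" "H1 \<noteq> {0}" "bounded_linear (\<lambda>x. P (H x))" by fact+
    show "\<And>x. x \<in> H1 \<Longrightarrow> P (H x) \<in> H1" by (rule A1S)
    show "\<And>x y. x \<in> H1 \<Longrightarrow> y \<in> H1 \<Longrightarrow> inner (P (H x)) y = inner x (P (H y))" by (rule A1sym)
    fix x assume x: "x \<in> H1"
    have "Lt t * (norm x)\<^sup>2 \<le> inner (H x + t *\<^sub>R (x - P x)) x" by (rule Ltlow)
    also have "\<dots> = inner (P (H x)) x" using Pp(5)[OF x] PHx[OF x] by simp
    finally show "Lt t * (norm x)\<^sup>2 \<le> inner (P (H x)) x" .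
  qed
  have L0: "0 \<le> L" unfolding L_def
    by (rule spec_char(2)[where S=H1 and A="\<lambda>x. P (H x)"]) (use cl sub nz A1bl A1S A1sym PHx Hpos in auto)
  have blN: "bounded_linear (\<lambda>x. H x + x)" using Hbl by (intro bounded_linear_add bounded_linear_ident)
  have LN: "L + 1 \<le> N"
  proof -
    define u where "u = (1 / norm x0) *\<^sub>R x0"
    have u: "u \<in> H1" "norm u = 1" using x0 sub unfolding u_def by (auto simp: subspace_scale)
    have "L \<le> inner (H u) u" using Llow[OF u(1)] u(2) by simp
    moreover have "inner u u = 1" using u(2) by (simp add: power2_norm_eq_inner[symmetric])
    ultimately have "L + 1 \<le> inner (H u + u) u" by (simp add: inner_add_left)
    also have "\<dots> \<le> norm (H u + u) * norm u" by (rule norm_cauchy_schwarz[THEN order_trans]) simp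
    also have "\<dots> \<le> N" using onorm[OF blN, of u] u(2) unfolding N_def by simp
    finally show ?thesis .
  qed
  have part2: "L - N\<^sup>2 / (t - L) \<le> Lt t" if t: "t \<ge> 2 * N\<^sup>2" for t
  proof -
    have tL: "t - L > 0" using fin(1)[OF L0 LN t] .
    show ?thesis unfolding Lt_def
    proof (rule spec_char(2)[where S=UNIV])
      show "closed (UNIV::'a set)" "subspace (UNIV::'a set)" "(UNIV::'a set) \<noteq> {0}" 
        "bounded_linear (\<lambda>x. H x + t *\<^sub>R (x - P x))" by (simp_all add: UNIVnz Atbl)
      show "\<And>x. x \<in> UNIV \<Longrightarrow> H x + t *\<^sub>R (x - P x) \<in> UNIV" by simp
      show "\<And>x y. x \<in> UNIV \<Longrightarrow> y \<in> UNIV \<Longrightarrow> inner (H x + t *\<^sub>R (x - P x)) y = inner x (H y + t *\<^sub>R (y - P y))" by (rule Atsym)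
      fix x :: 'a
      define u where "u = P x"
      define v where "v = x - P x"
      have u: "u \<in> H1" unfolding u_def by (rule Pp(3))
      have v: "v \<in> orthogonal_comp H1" unfolding v_def by (rule PO)
      have uv: "inner u v = 0" using u v unfolding orthogonal_comp_def orthogonal_def by auto
      have xuv: "x = u + v" unfolding u_def v_def by simp
      have nx: "(norm x)\<^sup>2 = (norm u)\<^sup>2 + (norm v)\<^sup>2"
        unfolding xuv using uv
        by (simp add: power2_norm_eq_inner inner_add_left inner_add_right inner_commute)
      have e1: "inner (H x + t *\<^sub>R (x - P x)) x = inner (H x) x + t * inner v x"
        unfolding v_def by (simp add: inner_add_left)
      have e2: "inner v x = (norm v)\<^sup>2" using uv unfolding xuv
        by (simp add: inner_add_right power2_norm_eq_inner inner_commute)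
      have e3: "inner (H x) x = inner (H u) u + 2 * inner (H u) v + inner (H v) v"
        using Hsym[of v u] unfolding xuv by (simp add: Hadd inner_add_left inner_add_right inner_commute)
      have "inner (H x + t *\<^sub>R (x - P x)) x = inner (H u) u + 2 * inner (H u) v + inner (H v) v + t * (norm v)\<^sup>2"
        using e1 e2 e3 by simp
      moreover have "L * (norm u)\<^sup>2 \<le> inner (H u) u" by (rule Llow[OF u])
      moreover have "0 \<le> inner (H v) v" by (rule Hpos)
      moreover have "- (N * norm u * norm v) \<le> inner (H u) v"
      proof -
        have "inner (H u) v = inner (H u + u) v" using uv by (simp add: inner_add_left)
        moreover have "\<bar>inner (H u + u) v\<bar> \<le> norm (H u + u) * norm v" by (rule Cauchy_Schwarz_ineq2)
        moreover have "norm (H u + u) * norm v \<le> N * norm u * norm v"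
          using onorm[OF blN, of u] unfolding N_def by (intro mult_right_mono) auto
        ultimately show ?thesis by linarith
      qed
      moreover have "(L - N\<^sup>2 / (t - L)) * ((norm u)\<^sup>2 + (norm v)\<^sup>2)
          \<le> L * (norm u)\<^sup>2 - 2 * N * norm u * norm v + (L + (t - L)) * (norm v)\<^sup>2"
        by (rule quad[OF tL])
      ultimately show "(L - N\<^sup>2 / (t - L)) * (norm x)\<^sup>2 \<le> inner (H x + t *\<^sub>R (x - P x)) x"
        unfolding nx by (simp add: algebra_simps)
    qed
  qed
  show ?thesis
    unfolding Qfun L_def[symmetric] N_def[symmetric] Lt_def[symmetric]
  proof (intro conjI allI impI)
    fix t :: real
    show "Lt t \<le> L" by (rule part1)
  next
    fix t :: real assume t: "2 * N\<^sup>2 \<le> t"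
    show "L - 4 * N\<^sup>2 * (L + 1)\<^sup>2 / (t + 1) \<le> Lt t"
      using part2[OF t] fin(2)[OF L0 LN t] by linarith
    show "L - 4 * N ^ 4 / (t + 1) \<le> L - 4 * N\<^sup>2 * (L + 1)\<^sup>2 / (t + 1)"
      using fin(3)[OF L0 LN t] by linarith
  qed
qed

end
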